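(* Suppose $J_1=J_2=J>0$ and $\Delta<1$. There exists a constant $c\in(0,\infty)$ (independent of $N$, $\theta$, $\Delta$) such that for every configuration $\mathbf S$ of the form $\mathbf S_{\boldsymbol r}=(\cos(\theta+\vartheta_{\boldsymbol r}),\sin(\theta+\vartheta_{\boldsymbol r}))$ with $\vartheta_{\boldsymbol r}\in(-\pi,\pi]$ and $|\mathbf S_{\boldsymbol r}-\boldsymbol e(\theta)|<\Delta$ for all $\boldsymbol r\in\mathbb T_N$, $$\bigl|\mathcal H_N(\mathbf S)+J|\mathbb T_N|-J\,G_{N,\theta}(\boldsymbol\vartheta)\bigr|\le cJ|\mathbb T_N|\Delta^3.$$
   Context: Torus model: $N$ even, $\mathbb T_N=(\mathbb Z/N\mathbb Z)^2$; $\langle \boldsymbol r,\boldsymbol r+\boldsymbol e_1\rangle$ is an $x$-edge if $r_1$ is even, a $z$-edge otherwise; $\langle\boldsymbol r,\boldsymbol r+\boldsymbol e_2\rangle$ is an $x$-edge if $r_2$ is even, a $z$-edge otherwise. $\mathcal H_N(\mathbf S)=-J\sum_{x\text{-edges}}S^x_{\boldsymbol r}S^x_{\boldsymbol r'}-J\sum_{z\text{-edges}}S^z_{\boldsymbol r}S^z_{\boldsymbol r'}$ for unit vectors $\mathbf S_{\boldsymbol r}=(S^x_{\boldsymbol r},S^z_{\boldsymbol r})$. $\boldsymbol e(\theta)=(\cos\theta,\sin\theta)$. For $\boldsymbol\vartheta=(\vartheta_{\boldsymbol r})$, $G_{N,\theta}(\boldsymbol\vartheta)=\frac12\sum_{x\text{-edges}\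 \langle\boldsymbol r,\boldsymbol r'\rangle}(\vartheta_{\boldsymbol r}-\vartheta_{\boldsymbol r'})^2\sin^2\theta+\frac12\sum_{z\text{-edges}\ \langle\boldsymbol r,\boldsymbol r'\rangle}(\vartheta_{\boldsymbol r}-\vartheta_{\boldsymbol r'})^2\cos^2\theta$. *)

theory Defs
  imports "HOL-Analysis.Analysis"
begin

text \<open>Sites of the torus T_N = (Z/NZ)^2, represented by pairs (a,b) with 0 <= a,b < N.\<close>
definition torus :: "nat \<Rightarrow> (nat \<times> nat) set" where
  "torus N = {0..<N} \<times> {0..<N}"

definition step1 :: "nat \<Rightarrow> nat \<times> nat \<Rightarrow> nat \<times> nat" where
  "step1 N r = ((fst r + 1) mod N, snd r)"
definition step2 :: "nat \<Rightarrow> nat \<times> nat \<Rightarrow> nat \<times> nat" where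
  "step2 N r = (fst r, (snd r + 1) mod N)"

text \<open>Unit vector e(theta); a spin is a pair (S^x, S^z).\<close>
definition evec :: "real \<Rightarrow> real \<times> real" where
  "evec \<theta> = (cos \<theta>, sin \<theta>)"

definition spin_config :: "real \<Rightarrow> (nat \<times> nat \<Rightarrow> real) \<Rightarrow> nat \<times> nat \<Rightarrow> real \<times> real" where
  "spin_config \<theta> \<phi> r = (cos (\<theta> + \<phi> r), sin (\<theta> + \<phi> r))"

definition ham :: "nat \<Rightarrow> real \<Rightarrow> (nat \<times> nat \<Rightarrow> real \<times> real) \<Rightarrow> real" where
  "ham N J S =
     - J * (\<Sum>r\<in>torus N.
              (if even (fst r) then fst (S r) * fst (S (step1 N r))
               else snd (S r) * snd (S (step1 N r)))
            + (if even (snd r) then fst (S r) * fst (S (step2 N r))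
               else snd (S r) * snd (S (step2 N r))))"

definition Gform :: "nat \<Rightarrow> real \<Rightarrow> (nat \<times> nat \<Rightarrow> real) \<Rightarrow> real" where
  "Gform N \<theta> \<phi> =
     (1/2) * (\<Sum>r\<in>torus N.
              (if even (fst r) then (\<phi> r - \<phi> (step1 N r))^2 * (sin \<theta>)^2
               else (\<phi> r - \<phi> (step1 N r))^2 * (cos \<theta>)^2)
            + (if even (snd r) then (\<phi> r - \<phi> (step2 N r))^2 * (sin \<theta>)^2
               else (\<phi> r - \<phi> (step2 N r))^2 * (cos \<theta>)^2))"

end

theory Submission
  imports Defs
begin


lemma sin_cubic: fixes x::real assumes "x \<ge> 0" shows "x - sin x \<le> x^3/6"
proof -
  let ?f = "\<lambda>x. x^3/6 - x + sin x"
  have d: "\<And>u. \<lbrakk>0 \<le> u; u \<le> x\<rbrakk> \<Longrightarrow> (?f has_real_derivative u^2/2 - 1 + cos u) (at u)"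
    by (auto intro!: derivative_eq_intros simp: field_simps)
  have nn: "u^2/2 - 1 + cos u \<ge> 0" for u::real
  proof -
    have "cos u = cos (2*(u/2))" by simp
    also have "\<dots> = 1 - 2 * sin (u/2)^2" by (rule cos_double_sin)
    finally have "cos u = 1 - 2 * sin (u/2)^2" .
    moreover have "sin (u/2)^2 \<le> (u/2)^2"
      using abs_sin_x_le_abs_x[of "u/2"] by (metis abs_ge_zero power2_abs power_mono)
    ultimately show ?thesis by (simp add: power_divide)
  qed
  have "?f x \<ge> ?f 0"
    by (rule DERIV_nonneg_imp_nondecreasing[OF assms]) (use d nn in blast)
  then show ?thesis by simp
qed

lemma abs_sin_cubic: fixes x::real shows "\<bar>sin x - x\<bar> \<le> \<bar>x\<bar>^3/6"
proof (cases "x \<ge> 0")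
  case True then show ?thesis using sin_cubic[of x] sin_x_le_x[of x] by auto
next
  case False then show ?thesis using sin_cubic[of "-x"] sin_x_le_x[of "-x"] by auto
qed

lemma sin_lower: fixes x::real assumes "0 \<le> x" "x \<le> pi/3" shows "x/2 \<le> sin x"
proof -
  let ?f = "\<lambda>x. sin x - x/2"
  have d: "\<And>u. \<lbrakk>0 \<le> u; u \<le> x\<rbrakk> \<Longrightarrow> (?f has_real_derivative cos u - 1/2) (at u)"
    by (auto intro!: derivative_eq_intros simp: field_simps)
  have nn: "0 \<le> u \<Longrightarrow> u \<le> x \<Longrightarrow> cos u - 1/2 \<ge> 0" for u
    using cos_monotone_0_pi_le[of u "pi/3"] assms cos_60 by auto
  have "?f x \<ge> ?f 0"
    by (rule DERIV_nonneg_imp_nondecreasing[OF assms(1)]) (use d nn in blast)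
  then show ?thesis by simp
qed

lemma sin_lip: fixes a b::real shows "\<bar>sin a - sin b\<bar> \<le> \<bar>a - b\<bar>"
proof -
  have "\<bar>sin a - sin b\<bar> = 2 * \<bar>sin ((a - b)/2)\<bar> * \<bar>cos ((a+b)/2)\<bar>"
    by (simp add: sin_diff_sin abs_mult)
  also have "\<dots> \<le> 2 * \<bar>(a-b)/2\<bar> * 1"
    using abs_sin_x_le_abs_x[of "(a-b)/2"] by (intro mult_mono) auto
  finally show ?thesis by simp
qed

lemma norm_bound: fixes t p D::real
  assumes "p \<in> {-pi<..pi}" "norm ((cos (t+p), sin (t+p)) - (cos t, sin t)) < D" "D < 1"
  shows "\<bar>p\<bar> < 2*D"
proof -
  have "(cos (t+p) - cos t)^2 + (sin (t+p) - sin t)^2 = 2 - 2 * cos p"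
  proof -
    have "(cos (t+p) - cos t)^2 + (sin (t+p) - sin t)^2 = (sin p^2 + cos p^2)*(sin t^2+cos t^2) + (sin t^2 + cos t^2) - 2*cos p*(sin t^2+cos t^2)"
      unfolding cos_add sin_add power2_eq_square by algebra
    then show ?thesis by simp
  qed
  also have "cos p = cos (2*(p/2))" by simp
  also have "\<dots> = 1 - 2 * sin (p/2)^2" by (rule cos_double_sin)
  finally have e: "(cos (t+p) - cos t)^2 + (sin (t+p) - sin t)^2 = (2*\<bar>sin (p/2)\<bar>)^2"
    by (simp add: power_mult_distrib)
  have "norm ((cos (t+p), sin (t+p)) - (cos t, sin t)) = 2*\<bar>sin (p/2)\<bar>"
    by (simp add: norm_Pair e real_sqrt_mult)
  moreover have "\<bar>sin (\<bar>p\<bar>/2)\<bar> = \<bar>sin (p/2)\<bar>" by (cases "p \<ge> 0") auto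
  ultimately have s: "\<bar>sin (\<bar>p\<bar>/2)\<bar> < 1/2" "\<bar>sin (\<bar>p\<bar>/2)\<bar> < D/2"
    using assms by auto
  have q0: "0 \<le> \<bar>p\<bar>/2" "\<bar>p\<bar>/2 \<le> pi/2" using assms(1) by auto
  have "\<bar>p\<bar>/2 < pi/6"
  proof (rule ccontr)
    assume "\<not> \<bar>p\<bar>/2 < pi/6"
    then have "sin (pi/6) \<le> sin (\<bar>p\<bar>/2)" using q0
      by (intro sin_monotone_2pi_le) auto
    then show False using s sin_30 by auto
  qed
  then have "\<bar>p\<bar>/4 \<le> sin (\<bar>p\<bar>/2)" using sin_lower[of "\<bar>p\<bar>/2"] q0 by auto
  then show ?thesis using s by auto
qed


lemma edge_cos: fixes a b t D :: real
  assumes ha: "\<bar>a\<bar> < 2*D" and hb: "\<bar>b\<bar> < 2*D" and D: "0 < D" "D < 1"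
  shows "\<bar>(cos (t+a) - cos (t+b))^2 - (a-b)^2 * (sin t)^2\<bar> \<le> 88 * D^3"
proof -
  define d where "d = a - b"
  define m where "m = (a+b)/2"
  define u where "u = cos (t+a) - cos (t+b)"
  define v where "v = - d * sin t"
  have hd: "\<bar>d\<bar> < 4*D" using ha hb unfolding d_def by linarith
  have hm: "\<bar>m\<bar> < 2*D" using ha hb unfolding m_def by (simp add: abs_less_iff)
  have u_eq: "u = - 2 * sin (t+m) * sin (d/2)"
  proof -
    have "u = 2 * sin ((t+a + (t+b))/2) * sin ((t+b - (t+a))/2)"
      unfolding u_def by (rule cos_diff_cos)
    also have "(t+a + (t+b))/2 = t + m" unfolding m_def by (simp add: field_simps)
    also have "(t+b - (t+a))/2 = - (d/2)" unfolding d_def by (simp add: field_simps)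
    finally show ?thesis by simp
  qed
  have uv: "u - v = - 2 * (sin (t+m) * (sin (d/2) - d/2)) - d * (sin (t+m) - sin t)"
    unfolding u_eq v_def by (simp add: algebra_simps)
  have b1: "\<bar>sin (t+m) * (sin (d/2) - d/2)\<bar> \<le> \<bar>d/2\<bar>^3/6"
  proof -
    have "\<bar>sin (t+m) * (sin (d/2) - d/2)\<bar> = \<bar>sin (t+m)\<bar> * \<bar>sin (d/2) - d/2\<bar>" by (simp add: abs_mult)
    also have "\<dots> \<le> 1 * (\<bar>d/2\<bar>^3/6)"
      by (intro mult_mono abs_sin_cubic) auto
    finally show ?thesis by simp
  qed
  have b2: "\<bar>d * (sin (t+m) - sin t)\<bar> \<le> \<bar>d\<bar> * \<bar>m\<bar>"
    using sin_lip[of "t+m" t] by (simp add: abs_mult mult_left_mono)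
  have c3: "\<bar>d/2\<bar>^3 \<le> (2*D)^3" using hd by (intro power_mono) auto
  have c4: "\<bar>d\<bar> * \<bar>m\<bar> \<le> (4*D) * (2*D)" using hd hm by (intro mult_mono) auto
  have "\<bar>u - v\<bar> \<le> 2 * (\<bar>d/2\<bar>^3/6) + \<bar>d\<bar> * \<bar>m\<bar>"
  proof -
    have t: "\<bar>- 2 * x - y\<bar> \<le> 2*\<bar>x\<bar> + \<bar>y\<bar>" for x y :: real by arith
    show ?thesis unfolding uv using t b1 b2 by (smt (verit))
  qed
  also have "\<dots> \<le> 2 * ((2*D)^3/6) + (4*D)*(2*D)" using c3 c4 by linarith
  also have "\<dots> \<le> 11 * D^2"
  proof -
    have "D^3 \<le> D^2" using D by (simp add: power_decreasing)
    moreover have "(2*D)^3 = 8*D^3" "(4*D)*(2*D) = 8*D^2" by (simp_all add: power2_eq_square power3_eq_cube)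
    moreover have "0 \<le> D^3" using D by simp
    ultimately show ?thesis by linarith
  qed
  finally have luv: "\<bar>u - v\<bar> \<le> 11 * D^2" .
  have "\<bar>u\<bar> \<le> 2 * \<bar>d/2\<bar>"
  proof -
    have "\<bar>u\<bar> = 2 * (\<bar>sin (t+m)\<bar> * \<bar>sin (d/2)\<bar>)" unfolding u_eq by (simp add: abs_mult)
    also have "\<bar>sin (t+m)\<bar> * \<bar>sin (d/2)\<bar> \<le> 1 * \<bar>d/2\<bar>"
      using abs_sin_x_le_abs_x[of "d/2"] by (intro mult_mono) auto
    finally show ?thesis by simp
  qed
  moreover have "\<bar>v\<bar> \<le> \<bar>d\<bar>" unfolding v_def by (simp add: abs_mult mult_left_le)
  ultimately have "\<bar>u + v\<bar> \<le> 8 * D" using hd by arith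
  have "\<bar>u^2 - v^2\<bar> = \<bar>u - v\<bar> * \<bar>u + v\<bar>"
    by (simp add: abs_mult[symmetric] power2_eq_square algebra_simps)
  also have "\<dots> \<le> (11 * D^2) * (8*D)" using luv \<open>\<bar>u + v\<bar> \<le> 8 * D\<close>
    by (intro mult_mono) auto
  also have "\<dots> = 88 * D^3" by (simp add: power2_eq_square power3_eq_cube)
  finally show ?thesis unfolding u_def v_def d_def by (simp add: power_mult_distrib power2_commute)
qed

lemma edge_sin: fixes a b t D :: real
  assumes "\<bar>a\<bar> < 2*D" "\<bar>b\<bar> < 2*D" "0 < D" "D < 1"
  shows "\<bar>(sin (t+a) - sin (t+b))^2 - (a-b)^2 * (cos t)^2\<bar> \<le> 88 * D^3"
proof -
  have "\<And>x. cos (t - pi/2 + x) = sin (t + x)" by (simp add: cos_diff sin_add cos_add algebra_simps)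
  moreover have "sin (t - pi/2) ^2 = cos t ^2" by (simp add: sin_diff)
  ultimately show ?thesis using edge_cos[OF assms, of "t - pi/2"] by simp
qed


lemma par_pred: fixes N a :: nat assumes "even N" "a < N" shows "even ((a + N - 1) mod N) \<longleftrightarrow> odd a"
proof (cases a)
  case 0 then show ?thesis using assms by (cases N) auto
next
  case (Suc k)
  then have "a + N - 1 = k + N" by simp
  then have "(a + N - 1) mod N = k" using assms Suc by simp
  then show ?thesis using Suc by simp
qed

lemma mod_back: fixes N a :: nat assumes "0 < N" "a < N" shows "((a+1) mod N + N - 1) mod N = a"
proof (cases "a + 1 = N")
  case True then have "(a+1) mod N = 0" by simp
  then show ?thesis using True by simp
next
  case False then have "a+1 < N" using assms by simp
  then show ?thesis by simp
qed

lemma mod_fwd: fixes N a :: nat assumes "0 < N" "a < N" shows "((a + N - 1) mod N + 1) mod N = a"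
proof (cases a)
  case 0 then show ?thesis using assms by (cases N) auto
next
  case (Suc k)
  then have "a + N - 1 = k + N" by simp
  then have "(a + N - 1) mod N = k" using assms Suc by simp
  then show ?thesis using Suc assms by simp
qed

lemma bij1: fixes N :: nat assumes "0 < N" shows "bij_betw (step1 N) (torus N) (torus N)"
proof (rule bij_betw_byWitness[where f'="\<lambda>r. ((fst r + N - 1) mod N, snd r)"])
  show "\<forall>a\<in>torus N. ((fst (step1 N a) + N - 1) mod N, snd (step1 N a)) = a"
  proof
    fix a assume "a \<in> torus N"
    then have "fst a < N" by (auto simp: torus_def)
    then show "((fst (step1 N a) + N - 1) mod N, snd (step1 N a)) = a"
      using mod_back[OF assms, of "fst a"] by (simp add: step1_def del: One_nat_def)
  qed
  show "\<forall>a\<in>torus N. step1 N ((fst a + N - 1) mod N, snd a) = a"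
  proof
    fix a assume "a \<in> torus N"
    then have "fst a < N" by (auto simp: torus_def)
    then show "step1 N ((fst a + N - 1) mod N, snd a) = a"
      using mod_fwd[OF assms, of "fst a"] by (simp add: step1_def del: One_nat_def)
  qed
  show "step1 N ` torus N \<subseteq> torus N" using assms by (auto simp: step1_def torus_def)
  show "(\<lambda>r. ((fst r + N - 1) mod N, snd r)) ` torus N \<subseteq> torus N"
    using assms by (auto simp: torus_def)
qed

lemma bij2: fixes N :: nat assumes "0 < N" shows "bij_betw (step2 N) (torus N) (torus N)"
proof (rule bij_betw_byWitness[where f'="\<lambda>r. (fst r, (snd r + N - 1) mod N)"])
  show "\<forall>a\<in>torus N. (fst (step2 N a), (snd (step2 N a) + N - 1) mod N) = a"
  proof
    fix a assume "a \<in> torus N"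
    then have "snd a < N" by (auto simp: torus_def)
    then show "(fst (step2 N a), (snd (step2 N a) + N - 1) mod N) = a"
      using mod_back[OF assms, of "snd a"] by (simp add: step2_def del: One_nat_def)
  qed
  show "\<forall>a\<in>torus N. step2 N (fst a, (snd a + N - 1) mod N) = a"
  proof
    fix a assume "a \<in> torus N"
    then have "snd a < N" by (auto simp: torus_def)
    then show "step2 N (fst a, (snd a + N - 1) mod N) = a"
      using mod_fwd[OF assms, of "snd a"] by (simp add: step2_def del: One_nat_def)
  qed
  show "step2 N ` torus N \<subseteq> torus N" using assms by (auto simp: step2_def torus_def)
  show "(\<lambda>r. (fst r, (snd r + N - 1) mod N)) ` torus N \<subseteq> torus N"
    using assms by (auto simp: torus_def)
qed

lemma shift1: fixes N :: nat assumes "even N" "0 < N"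
  shows "(\<Sum>r\<in>torus N. if even (fst r) then h (step1 N r) else k (step1 N r))
       = (\<Sum>r\<in>torus N. if even (fst r) then (k r::real) else h r)"
proof -
  define G where "G r = (if even ((fst r + N - 1) mod N) then h r else k r)" for r
  have "(\<Sum>r\<in>torus N. if even (fst r) then h (step1 N r) else k (step1 N r))
      = (\<Sum>r\<in>torus N. G (step1 N r))"
  proof (rule sum.cong[OF refl])
    fix r assume "r \<in> torus N"
    then have "fst r < N" by (auto simp: torus_def)
    then show "(if even (fst r) then h (step1 N r) else k (step1 N r)) = G (step1 N r)"
      unfolding G_def using mod_back[OF assms(2), of "fst r"] by (simp add: step1_def del: One_nat_def)
  qed
  also have "\<dots> = (\<Sum>r\<in>torus N. G r)"
    by (rule sum.reindex_bij_betw[OF bij1[OF assms(2)]])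
  also have "\<dots> = (\<Sum>r\<in>torus N. if even (fst r) then k r else h r)"
  proof (rule sum.cong[OF refl])
    fix r assume "r \<in> torus N"
    then have "fst r < N" by (auto simp: torus_def)
    then show "G r = (if even (fst r) then k r else h r)"
      unfolding G_def using par_pred[OF assms(1), of "fst r"] by simp
  qed
  finally show ?thesis .
qed

lemma shift2: fixes N :: nat assumes "even N" "0 < N"
  shows "(\<Sum>r\<in>torus N. if even (snd r) then h (step2 N r) else k (step2 N r))
       = (\<Sum>r\<in>torus N. if even (snd r) then (k r::real) else h r)"
proof -
  define G where "G r = (if even ((snd r + N - 1) mod N) then h r else k r)" for r
  have "(\<Sum>r\<in>torus N. if even (snd r) then h (step2 N r) else k (step2 N r))
      = (\<Sum>r\<in>torus N. G (step2 N r))"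
  proof (rule sum.cong[OF refl])
    fix r assume "r \<in> torus N"
    then have "snd r < N" by (auto simp: torus_def)
    then show "(if even (snd r) then h (step2 N r) else k (step2 N r)) = G (step2 N r)"
      unfolding G_def using mod_back[OF assms(2), of "snd r"] by (simp add: step2_def del: One_nat_def)
  qed
  also have "\<dots> = (\<Sum>r\<in>torus N. G r)"
    by (rule sum.reindex_bij_betw[OF bij2[OF assms(2)]])
  also have "\<dots> = (\<Sum>r\<in>torus N. if even (snd r) then k r else h r)"
  proof (rule sum.cong[OF refl])
    fix r assume "r \<in> torus N"
    then have "snd r < N" by (auto simp: torus_def)
    then show "G r = (if even (snd r) then k r else h r)"
      unfolding G_def using par_pred[OF assms(1), of "snd r"] by simp
  qed
  finally show ?thesis .
qed

lemma torus_fin: "finite (torus N)" by (simp add: torus_def)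
lemma main_bound:
  fixes N :: nat and J \<theta> \<Delta> :: real and \<phi> :: "nat \<times> nat \<Rightarrow> real"
  assumes N: "even N" "0 < N" and J: "0 < J" and D1: "\<Delta> < 1"
    and hyp: "\<forall>r\<in>torus N. \<phi> r \<in> {-pi<..pi} \<and> norm (spin_config \<theta> \<phi> r - evec \<theta>) < \<Delta>"
  shows "\<bar>ham N J (spin_config \<theta> \<phi>) + J * real (card (torus N)) - J * Gform N \<theta> \<phi>\<bar>
           \<le> 88 * J * real (card (torus N)) * \<Delta>^3"
proof -
  define T where "T = torus N"
  have fin: "finite T" unfolding T_def by (rule torus_fin)
  have "(0,0) \<in> T" using N unfolding T_def torus_def by auto
  then have D0: "0 < \<Delta>" using hyp unfolding T_def by (meson norm_ge_zero le_less_trans)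
  have bnd: "\<bar>\<phi> r\<bar> < 2*\<Delta>" if "r \<in> T" for r
    using hyp that D1 norm_bound[of "\<phi> r" \<theta> \<Delta>] unfolding T_def spin_config_def evec_def by auto
  define A where "A r = cos (\<theta> + \<phi> r)" for r
  define B where "B r = sin (\<theta> + \<phi> r)" for r
  let ?s1 = "step1 N" and ?s2 = "step2 N"
  define P1 where "P1 r = (if even (fst r) then A r^2 else B r^2)/2
      + (if even (fst r) then A (?s1 r)^2 else B (?s1 r)^2)/2" for r
  define P2 where "P2 r = (if even (snd r) then A r^2 else B r^2)/2
      + (if even (snd r) then A (?s2 r)^2 else B (?s2 r)^2)/2" for r
  define Q1 where "Q1 r = (if even (fst r) then (A r - A (?s1 r))^2/2 else (B r - B (?s1 r))^2/2)" for r
  define Q2 where "Q2 r = (if even (snd r) then (A r - A (?s2 r))^2/2 else (B r - B (?s2 r))^2/2)" for r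
  define G1 where "G1 r = (if even (fst r) then (\<phi> r - \<phi> (?s1 r))^2 * (sin \<theta>)^2
               else (\<phi> r - \<phi> (?s1 r))^2 * (cos \<theta>)^2)" for r
  define G2 where "G2 r = (if even (snd r) then (\<phi> r - \<phi> (?s2 r))^2 * (sin \<theta>)^2
               else (\<phi> r - \<phi> (?s2 r))^2 * (cos \<theta>)^2)" for r
  have AB: "A r^2 + B r^2 = 1" for r unfolding A_def B_def by (simp add: add.commute)
  have AB2: "A r^2 * 2 + B r^2 * 2 = 2" for r using AB[of r] by simp
  have sumP1: "(\<Sum>r\<in>T. P1 r) = real (card T) / 2"
  proof -
    have sh: "(\<Sum>r\<in>T. if even (fst r) then A (?s1 r)^2 else B (?s1 r)^2)
        = (\<Sum>r\<in>T. if even (fst r) then B r^2 else A r^2)"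
      unfolding T_def by (rule shift1[OF N])
    have "(\<Sum>r\<in>T. P1 r) = (\<Sum>r\<in>T. (if even (fst r) then A r^2 else B r^2))/2
         + (\<Sum>r\<in>T. if even (fst r) then A (?s1 r)^2 else B (?s1 r)^2)/2"
      unfolding P1_def by (simp only: sum.distrib sum_divide_distrib)
    also have "\<dots> = (\<Sum>r\<in>T. (if even (fst r) then A r^2 else B r^2))/2
         + (\<Sum>r\<in>T. if even (fst r) then B r^2 else A r^2)/2"
      by (simp only: sh)
    also have "\<dots> = (\<Sum>r\<in>T. (if even (fst r) then A r^2 else B r^2)/2
         + (if even (fst r) then B r^2 else A r^2)/2)"
      by (simp only: sum.distrib sum_divide_distrib)
    also have "\<dots> = (\<Sum>r\<in>T. 1/2)"
    proof (rule sum.cong[OF refl])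
      fix r
      have "A r^2/2 + B r^2/2 = 1/2" "B r^2/2 + A r^2/2 = 1/2" using AB[of r] by linarith+
      then show "(if even (fst r) then A r^2 else B r^2)/2
         + (if even (fst r) then B r^2 else A r^2)/2 = 1/2" by simp
    qed
    finally show ?thesis by simp
  qed
  have sumP2: "(\<Sum>r\<in>T. P2 r) = real (card T) / 2"
  proof -
    have sh: "(\<Sum>r\<in>T. if even (snd r) then A (?s2 r)^2 else B (?s2 r)^2)
        = (\<Sum>r\<in>T. if even (snd r) then B r^2 else A r^2)"
      unfolding T_def by (rule shift2[OF N])
    have "(\<Sum>r\<in>T. P2 r) = (\<Sum>r\<in>T. (if even (snd r) then A r^2 else B r^2))/2
         + (\<Sum>r\<in>T. if even (snd r) then A (?s2 r)^2 else B (?s2 r)^2)/2"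
      unfolding P2_def by (simp only: sum.distrib sum_divide_distrib)
    also have "\<dots> = (\<Sum>r\<in>T. (if even (snd r) then A r^2 else B r^2))/2
         + (\<Sum>r\<in>T. if even (snd r) then B r^2 else A r^2)/2"
      by (simp only: sh)
    also have "\<dots> = (\<Sum>r\<in>T. (if even (snd r) then A r^2 else B r^2)/2
         + (if even (snd r) then B r^2 else A r^2)/2)"
      by (simp only: sum.distrib sum_divide_distrib)
    also have "\<dots> = (\<Sum>r\<in>T. 1/2)"
    proof (rule sum.cong[OF refl])
      fix r
      have "A r^2/2 + B r^2/2 = 1/2" "B r^2/2 + A r^2/2 = 1/2" using AB[of r] by linarith+
      then show "(if even (snd r) then A r^2 else B r^2)/2
         + (if even (snd r) then B r^2 else A r^2)/2 = 1/2" by simp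
    qed
    finally show ?thesis by simp
  qed
  have ham_eq: "ham N J (spin_config \<theta> \<phi>) = - J * (\<Sum>r\<in>T. P1 r + P2 r - Q1 r - Q2 r)"
    unfolding ham_def T_def
  proof (intro arg_cong[where f="\<lambda>x. - J * x"] sum.cong refl)
    fix r
    show "(if even (fst r) then fst (spin_config \<theta> \<phi> r) * fst (spin_config \<theta> \<phi> (?s1 r))
             else snd (spin_config \<theta> \<phi> r) * snd (spin_config \<theta> \<phi> (?s1 r))) +
          (if even (snd r) then fst (spin_config \<theta> \<phi> r) * fst (spin_config \<theta> \<phi> (?s2 r))
             else snd (spin_config \<theta> \<phi> r) * snd (spin_config \<theta> \<phi> (?s2 r)))
          = P1 r + P2 r - Q1 r - Q2 r"
    proof -
      have fA: "fst (spin_config \<theta> \<phi> x) = A x" for x by (simp add: spin_config_def A_def)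
      have fB: "snd (spin_config \<theta> \<phi> x) = B x" for x by (simp add: spin_config_def B_def)
      have key: "x*y = x^2/2 + y^2/2 - (x-y)^2/2" for x y :: real
        by (simp add: power2_eq_square field_simps)
      have k1: "(if even (fst r) then A r * A (?s1 r) else B r * B (?s1 r)) = P1 r - Q1 r"
        unfolding P1_def Q1_def by (cases "even (fst r)") (simp_all only: if_True if_False key)
      have k2: "(if even (snd r) then A r * A (?s2 r) else B r * B (?s2 r)) = P2 r - Q2 r"
        unfolding P2_def Q2_def by (cases "even (snd r)") (simp_all only: if_True if_False key)
      show ?thesis unfolding fA fB k1 k2 by simp
    qed
  qed
  have G_eq: "Gform N \<theta> \<phi> = (\<Sum>r\<in>T. G1 r/2 + G2 r/2)"
  proof -
    have "Gform N \<theta> \<phi> = (1/2) * (\<Sum>r\<in>T. G1 r + G2 r)"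
      unfolding Gform_def G1_def G2_def T_def by (rule refl)
    also have "\<dots> = (\<Sum>r\<in>T. G1 r/2 + G2 r/2)"
      unfolding sum_distrib_left by (intro sum.cong refl) simp
    finally show ?thesis .
  qed
  have per: "\<bar>(Q1 r - G1 r/2) + (Q2 r - G2 r/2)\<bar> \<le> 88 * \<Delta>^3" if r: "r \<in> T" for r
  proof -
    have s1: "?s1 r \<in> T" "?s2 r \<in> T" using r N unfolding T_def torus_def step1_def step2_def by auto
    have h: "\<And>x y. \<bar>x - y\<bar> \<le> 88*\<Delta>^3 \<Longrightarrow> \<bar>x/2 - y/2\<bar> \<le> 44*\<Delta>^3" by arith
    have e1: "\<bar>Q1 r - G1 r/2\<bar> \<le> 44 * \<Delta>^3"
    proof (cases "even (fst r)")
      case True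
      then have eq: "Q1 r - G1 r/2 = (cos (\<theta> + \<phi> r) - cos (\<theta> + \<phi> (?s1 r)))^2/2 - ((\<phi> r - \<phi> (?s1 r))^2 * (sin \<theta>)^2)/2"
        unfolding Q1_def G1_def A_def B_def by simp
      show ?thesis by (subst eq) (rule h[OF edge_cos[OF bnd[OF r] bnd[OF s1(1)] D0 D1]])
    next
      case False
      then have eq: "Q1 r - G1 r/2 = (sin (\<theta> + \<phi> r) - sin (\<theta> + \<phi> (?s1 r)))^2/2 - ((\<phi> r - \<phi> (?s1 r))^2 * (cos \<theta>)^2)/2"
        unfolding Q1_def G1_def A_def B_def by simp
      show ?thesis by (subst eq) (rule h[OF edge_sin[OF bnd[OF r] bnd[OF s1(1)] D0 D1]])
    qed
    have e2: "\<bar>Q2 r - G2 r/2\<bar> \<le> 44 * \<Delta>^3"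
    proof (cases "even (snd r)")
      case True
      then have eq: "Q2 r - G2 r/2 = (cos (\<theta> + \<phi> r) - cos (\<theta> + \<phi> (?s2 r)))^2/2 - ((\<phi> r - \<phi> (?s2 r))^2 * (sin \<theta>)^2)/2"
        unfolding Q2_def G2_def A_def B_def by simp
      show ?thesis by (subst eq) (rule h[OF edge_cos[OF bnd[OF r] bnd[OF s1(2)] D0 D1]])
    next
      case False
      then have eq: "Q2 r - G2 r/2 = (sin (\<theta> + \<phi> r) - sin (\<theta> + \<phi> (?s2 r)))^2/2 - ((\<phi> r - \<phi> (?s2 r))^2 * (cos \<theta>)^2)/2"
        unfolding Q2_def G2_def A_def B_def by simp
      show ?thesis by (subst eq) (rule h[OF edge_sin[OF bnd[OF r] bnd[OF s1(2)] D0 D1]])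
    qed
    show ?thesis using e1 e2 by arith
  qed
  have "ham N J (spin_config \<theta> \<phi>) + J * real (card (torus N)) - J * Gform N \<theta> \<phi>
      = J * (\<Sum>r\<in>T. (Q1 r - G1 r/2) + (Q2 r - G2 r/2))"
  proof -
    have a: "(\<Sum>r\<in>T. P1 r + P2 r - Q1 r - Q2 r) = (\<Sum>r\<in>T. P1 r) + (\<Sum>r\<in>T. P2 r) - (\<Sum>r\<in>T. Q1 r) - (\<Sum>r\<in>T. Q2 r)"
      by (simp only: sum_subtractf sum.distrib)
    have b: "(\<Sum>r\<in>T. (Q1 r - G1 r/2) + (Q2 r - G2 r/2)) = (\<Sum>r\<in>T. Q1 r) + (\<Sum>r\<in>T. Q2 r) - (\<Sum>r\<in>T. G1 r/2 + G2 r/2)"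
      by (simp add: sum_subtractf sum.distrib)
    have c: "(\<Sum>r\<in>T. P1 r) + (\<Sum>r\<in>T. P2 r) = real (card T)" using sumP1 sumP2 by simp
    show ?thesis unfolding ham_eq G_eq T_def[symmetric] a b
      using c by (simp add: algebra_simps)
  qed
  also have "\<bar>\<dots>\<bar> = J * \<bar>\<Sum>r\<in>T. (Q1 r - G1 r/2) + (Q2 r - G2 r/2)\<bar>" using J by (simp add: abs_mult)
  also have "\<dots> \<le> J * (\<Sum>r\<in>T. 88 * \<Delta>^3)"
    using J per by (intro mult_left_mono order_trans[OF sum_abs sum_mono]) auto
  also have "\<dots> = 88 * J * real (card (torus N)) * \<Delta>^3" unfolding T_def by simp
  finally show ?thesis .
qed

theorem lemma4p4:
  shows "\<exists>c::real. 0 < c \<and>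
    (\<forall>(N::nat) (J::real) (\<theta>::real) (\<Delta>::real) (\<phi>::nat \<times> nat \<Rightarrow> real).
       even N \<and> 0 < N \<and> 0 < J \<and> \<Delta> < 1 \<and>
       (\<forall>r\<in>torus N. \<phi> r \<in> {-pi<..pi} \<and>
                      norm (spin_config \<theta> \<phi> r - evec \<theta>) < \<Delta>)
       \<longrightarrow> \<bar>ham N J (spin_config \<theta> \<phi>) + J * real (card (torus N))
             - J * Gform N \<theta> \<phi>\<bar>
           \<le> c * J * real (card (torus N)) * \<Delta>^3)"
  by (rule exI[of _ 88]) (auto intro: main_bound)

end
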